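(* Let $0<\delta<1$, $0<\varepsilon<1/7$, $2<\alpha<\min(\frac{2}{1-\delta},3)$ and $0<\rho<\min\!\left(\frac{1-\delta}{2},\frac{2-\alpha(1-\delta)}{4}\right)$. Then for all sufficiently large $n$ the following holds. Let $G\sim G(n,p)$ with $p=n^{\delta-1}$, and let $H$ be a balanced graph on $m=n^{\rho}$ vertices with average degree $\alpha$. Then $\mathbb E[X_H(G)]\to+\infty$ as $n\to\infty$, and for every $\beta\in[0,1)$, \[\Pr\big[X_H(G)\le\beta\,\mathbb E[X_H(G)]\big]\le\frac{4\varepsilon}{(1-\beta)^2}.\]
   Context: A graph with average degree $\alpha$ is balanced if every induced subgraph has average degree at most $\alpha$. $G(n,p)$ is the Erdős–Rényi random graph on $[n]$. With $H$ on vertex set $[m]$ ($m$ assumed to divide $n$), partition $[n]$ into parts $P_i=\{(i-1)\frac nm+1,\dots,i\frac nm\}$. $X_H(G)$ is the number of sets $S=\{v_1,\dots,v_m\}$ with $v_i\in P_i$ such that $i\mapsto v_i$ is an isomorphism from $H$ onto the induced subgraph $G[S]$. *)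

theory Defs
  imports "HOL-Probability.Probability"
begin

text \<open>Simple graphs are represented by their edge sets: sets of 2-element sets of vertices.\<close>

definition all_edges :: "nat set \<Rightarrow> nat set set" where
  "all_edges V = {e. e \<subseteq> V \<and> card e = 2}"

definition is_graph_on :: "nat set \<Rightarrow> nat set set \<Rightarrow> bool" where
  "is_graph_on V E \<longleftrightarrow> E \<subseteq> all_edges V"

definition induced_edges :: "nat set set \<Rightarrow> nat set \<Rightarrow> nat set set" where
  "induced_edges E U = {e \<in> E. e \<subseteq> U}"

definition avg_degree :: "nat set \<Rightarrow> nat set set \<Rightarrow> real" where
  "avg_degree V E = 2 * real (card E) / real (card V)"

definition balanced :: "nat set \<Rightarrow> nat set set \<Rightarrow> bool" where
  "balanced V E \<longleftrightarrow>
     (\<forall>U. U \<subseteq> V \<longrightarrow> U \<noteq> {} \<longrightarrow> avg_degree U (induced_edges E U) \<le> avg_degree V E)"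

definition gnp :: "nat \<Rightarrow> real \<Rightarrow> nat set set pmf" where
  "gnp n p = map_pmf (\<lambda>f. {e \<in> all_edges {1..n}. f e})
                     (Pi_pmf (all_edges {1..n}) False (\<lambda>_. bernoulli_pmf p))"

definition part :: "nat \<Rightarrow> nat \<Rightarrow> nat \<Rightarrow> nat set" where
  "part n m i = {(i - 1) * (n div m) + 1 .. i * (n div m)}"

definition XH :: "nat \<Rightarrow> nat \<Rightarrow> nat set set \<Rightarrow> nat set set \<Rightarrow> nat" where
  "XH n m H G = card {S. \<exists>v \<in> Pi\<^sub>E {1..m} (part n m).
       S = v ` {1..m} \<and> inj_on v {1..m} \<and>
       (\<forall>i\<in>{1..m}. \<forall>j\<in>{1..m}. i \<noteq> j \<longrightarrow> ({i, j} \<in> H \<longleftrightarrow> {v i, v j} \<in> G))}"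

end

theory Submission
  imports Defs
begin

definition idx :: "nat \<Rightarrow> nat \<Rightarrow> nat" where "idx s x = (x - 1) div s + 1"

lemma idx_eq: assumes "0 < (s::nat)" "1 \<le> i" "(i - 1) * s + 1 \<le> (x::nat)" "x \<le> i * s" shows "idx s x = i"
proof -
  have "(x - 1) div s = i - 1"
  proof (rule div_nat_eqI)
    show "s * (i - 1) \<le> x - 1" using assms by (simp add: mult.commute)
    show "x - 1 < s * Suc (i - 1)" using assms by (simp add: mult.commute)
  qed
  then show ?thesis using assms unfolding idx_def by simp
qed

locale gsetup =
  fixes n m :: nat and H :: "nat set set" and p :: real
  assumes m_pos: "1 \<le> m" and s_pos: "1 \<le> n div m" and Hg: "is_graph_on {1..m} H" and Hbal: "balanced {1..m} H"
    and p_pos: "0 < p" and p_lt1: "p < 1"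
begin

abbreviation "s \<equiv> n div m"
definition "PV = Pi\<^sub>E {1..m} (part n m)"
definition "Ev v G = (\<forall>i\<in>{1..m}. \<forall>j\<in>{1..m}. i \<noteq> j \<longrightarrow> ({i, j} \<in> H \<longleftrightarrow> {v i, v j} \<in> G))"
definition "E0 = all_edges {1..n}"
definition "Q = Pi_pmf E0 False (\<lambda>_. bernoulli_pmf p)"
definition "gr f = {e\<in>E0. f e}"
definition "T e = (idx s ` e \<in> H)"
definition "r e = (if T e then p else 1 - p)"
definition "Dv v = (\<lambda>e. v ` e) ` all_edges {1..m}"

lemma gnp_eq: "gnp n p = map_pmf gr Q"
  unfolding gnp_def gr_def Q_def E0_def ..

lemma part_props: assumes "v \<in> PV" "i \<in> {1..m}"
  shows "v i \<in> part n m i" "idx s (v i) = i" "v i \<in> {1..n}"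
proof -
  show vi: "v i \<in> part n m i" using assms unfolding PV_def by auto
  then show "idx s (v i) = i" using assms s_pos by (intro idx_eq) (auto simp: part_def)
  have "i * s \<le> m * s" using assms by auto
  also have "\<dots> \<le> n" by simp
  finally show "v i \<in> {1..n}" using vi by (auto simp: part_def)
qed

lemma PV_inj: assumes "v \<in> PV" shows "inj_on v {1..m}"
  by (metis assms inj_onI part_props(2))

lemma finite_PV: "finite PV" unfolding PV_def by (auto simp: part_def intro!: finite_PiE)

lemma card_part: "1 \<le> i \<Longrightarrow> card (part n m i) = s"
  by (cases i) (auto simp: part_def)

lemma card_PV: "card PV = s ^ m"
  unfolding PV_def by (simp add: card_PiE card_part)

lemma XH_eq: "XH n m H G = card {v\<in>PV. Ev v G}"
proof -
  have "{S. \<exists>v \<in> Pi\<^sub>E {1..m} (part n m).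
       S = v ` {1..m} \<and> inj_on v {1..m} \<and>
       (\<forall>i\<in>{1..m}. \<forall>j\<in>{1..m}. i \<noteq> j \<longrightarrow> ({i, j} \<in> H \<longleftrightarrow> {v i, v j} \<in> G))}
     = (\<lambda>v. v ` {1..m}) ` {v\<in>PV. Ev v G}"
    using PV_inj by (auto simp: PV_def Ev_def)
  moreover have "inj_on (\<lambda>v. v ` {1..m}) {v\<in>PV. Ev v G}"
  proof (rule inj_onI)
    fix v w assume v: "v \<in> {v\<in>PV. Ev v G}" and w: "w \<in> {v\<in>PV. Ev v G}"
      and eq: "v ` {1..m} = w ` {1..m}"
    have "v i = w i" for i
    proof (cases "i \<in> {1..m}")
      case True
      then have "v i \<in> w ` {1..m}" using eq by auto
      then obtain j where j: "j \<in> {1..m}" "v i = w j" by auto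
      then have "i = j" using part_props(2)[of v i] part_props(2)[of w j] v w True by auto
      then show ?thesis using j by simp
    next
      case False
      then show ?thesis using v w by (auto simp: PV_def PiE_def extensional_def)
    qed
    then show "v = w" by auto
  qed
  ultimately show ?thesis unfolding XH_def by (simp add: card_image)
qed

lemma all_edges_E: assumes "e \<in> all_edges V" obtains i j where "e = {i, j}" "i \<noteq> j" "i \<in> V" "j \<in> V"
  using assms unfolding all_edges_def by (auto simp: card_2_iff)

lemma all_edges_I: "i \<noteq> j \<Longrightarrow> i \<in> V \<Longrightarrow> j \<in> V \<Longrightarrow> {i, j} \<in> all_edges V"
  unfolding all_edges_def by auto

lemma finite_all_edges: "finite V \<Longrightarrow> finite (all_edges V)"
  unfolding all_edges_def by auto

lemma idx_img: assumes "v \<in> PV" "e \<subseteq> {1..m}" shows "idx s ` v ` e = e"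
proof -
  have h: "\<forall>i\<in>e. idx s (v i) = i" using part_props(2)[OF assms(1)] assms(2) by blast
  have "idx s ` v ` e = (\<lambda>i. idx s (v i)) ` e" by (simp add: image_image)
  also have "\<dots> = (\<lambda>i. i) ` e" using h by (intro image_cong) auto
  finally show ?thesis by simp
qed

lemma Dv_sub: assumes "v \<in> PV" shows "Dv v \<subseteq> E0"
proof
  fix x assume "x \<in> Dv v"
  then obtain e where e: "e \<in> all_edges {1..m}" "x = v ` e" unfolding Dv_def by auto
  obtain i j where ij: "e = {i, j}" "i \<noteq> j" "i \<in> {1..m}" "j \<in> {1..m}" using e(1) by (rule all_edges_E)
  have "v i \<noteq> v j" using PV_inj[OF assms] ij by (auto dest: inj_onD)
  moreover have "v i \<in> {1..n}" "v j \<in> {1..n}" using ij part_props(3)[OF assms] by auto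
  ultimately have "{v i, v j} \<in> all_edges {1..n}" by (rule all_edges_I)
  then show "x \<in> E0" using e ij unfolding E0_def by simp
qed

end

context gsetup begin
lemma gr_mem: "x \<in> E0 \<Longrightarrow> x \<in> gr f \<longleftrightarrow> f x"
  unfolding gr_def by simp

lemma all_edges_sub: "e \<in> all_edges V \<Longrightarrow> e \<subseteq> V"
  unfolding all_edges_def by simp

lemma T_img: assumes "v \<in> PV" "i \<in> {1..m}" "j \<in> {1..m}"
  shows "T {v i, v j} = ({i, j} \<in> H)"
proof -
  have "idx s ` v ` {i, j} = {i, j}" using part_props(2)[OF assms(1) assms(2)] part_props(2)[OF assms(1) assms(3)] by simp
  then show ?thesis unfolding T_def by simp
qed

lemma Ev_gr: assumes "v \<in> PV" shows "Ev v (gr f) \<longleftrightarrow> (\<forall>e\<in>Dv v. f e = T e)"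
proof
  assume ev: "Ev v (gr f)"
  show "\<forall>e\<in>Dv v. f e = T e"
  proof
    fix x assume x: "x \<in> Dv v"
    then obtain e where e: "e \<in> all_edges {1..m}" "x = v ` e" unfolding Dv_def by auto
    obtain i j where ij: "e = {i, j}" "i \<noteq> j" "i \<in> {1..m}" "j \<in> {1..m}" using e(1) by (rule all_edges_E)
    have xv: "x = {v i, v j}" using e(2) ij(1) by simp
    have xE: "x \<in> E0" using x Dv_sub[OF assms] by blast
    have T: "T x = ({i, j} \<in> H)" unfolding xv by (rule T_img[OF assms ij(3,4)])
    have "i \<noteq> j \<longrightarrow> (({i, j} \<in> H) = ({v i, v j} \<in> gr f))" using ev ij(3,4) unfolding Ev_def by blast
    then have "({i, j} \<in> H) = (x \<in> gr f)" using ij(2) xv by simp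
    then show "f x = T x" using T gr_mem[OF xE] by simp
  qed
next
  assume h: "\<forall>e\<in>Dv v. f e = T e"
  show "Ev v (gr f)" unfolding Ev_def
  proof (intro ballI impI)
    fix i j assume ij: "i \<in> {1..m}" "j \<in> {1..m}" "i \<noteq> j"
    have e: "{i, j} \<in> all_edges {1..m}" using ij by (intro all_edges_I)
    have x: "{v i, v j} \<in> Dv v" unfolding Dv_def using e by (metis image_empty image_eqI image_insert)
    have xE: "{v i, v j} \<in> E0" using x Dv_sub[OF assms] by blast
    have T: "T {v i, v j} = ({i, j} \<in> H)" by (rule T_img[OF assms ij(1,2)])
    show "({i, j} \<in> H) = ({v i, v j} \<in> gr f)" using h x T gr_mem[OF xE] by simp
  qed
qed

lemma finite_E0: "finite E0" unfolding E0_def by (auto intro: finite_all_edges)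

lemma prob_Q: assumes "D \<subseteq> E0"
  shows "measure_pmf.prob Q {f. \<forall>e\<in>D. f e = T e} = (\<Prod>e\<in>D. r e)"
proof -
  define B where "B e = (if e \<in> D then {T e} else UNIV)" for e
  have "{f. \<forall>e\<in>D. f e = T e} = Pi E0 B" using assms unfolding B_def Pi_def by auto
  then have "measure_pmf.prob Q {f. \<forall>e\<in>D. f e = T e} = (\<Prod>e\<in>E0. measure_pmf.prob (bernoulli_pmf p) (B e))"
    unfolding Q_def using finite_E0 by (simp add: measure_Pi_pmf_Pi)
  also have "\<dots> = (\<Prod>e\<in>E0. if e \<in> D then r e else 1)"
    using p_pos p_lt1 by (intro prod.cong) (auto simp: B_def r_def measure_pmf_single)
  also have "\<dots> = prod r (E0 \<inter> D)" by (rule prod.inter_restrict[symmetric]) (rule finite_E0)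
  also have "E0 \<inter> D = D" using assms by blast
  finally show ?thesis .
qed

definition "P0 = (\<Prod>e\<in>all_edges {1..m}. if e \<in> H then p else 1 - p)"

lemma inj_Dv: "v \<in> PV \<Longrightarrow> A \<subseteq> {1..m} \<Longrightarrow> inj_on (\<lambda>e. v ` e) (all_edges A)"
  by (rule inj_on_subset[OF inj_on_image_Pow[OF PV_inj]]) (auto simp: all_edges_def)

lemma prod_img: assumes "v \<in> PV" "A \<subseteq> {1..m}"
  shows "(\<Prod>x\<in>(\<lambda>e. v ` e) ` all_edges A. r x) = (\<Prod>e\<in>all_edges A. if e \<in> H then p else 1 - p)"
proof -
  have "(\<Prod>x\<in>(\<lambda>e. v ` e) ` all_edges A. r x) = (\<Prod>e\<in>all_edges A. r (v ` e))"
    by (simp add: prod.reindex[OF inj_Dv[OF assms]])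
  also have "\<dots> = (\<Prod>e\<in>all_edges A. if e \<in> H then p else 1 - p)"
  proof (rule prod.cong[OF refl])
    fix e assume "e \<in> all_edges A"
    then have "e \<subseteq> {1..m}" using all_edges_sub assms(2) by blast
    then have "idx s ` v ` e = e" by (rule idx_img[OF assms(1)])
    then show "r (v ` e) = (if e \<in> H then p else 1 - p)" by (simp add: r_def T_def)
  qed
  finally show ?thesis .
qed

lemma prod_Dv: "v \<in> PV \<Longrightarrow> (\<Prod>x\<in>Dv v. r x) = P0"
  unfolding Dv_def P0_def by (rule prod_img) auto

lemma inter_sub: assumes v: "v \<in> PV" and w: "w \<in> PV"
  shows "Dv v \<inter> Dv w \<subseteq> (\<lambda>e. v ` e) ` all_edges {i\<in>{1..m}. v i = w i}"
proof
  fix x assume "x \<in> Dv v \<inter> Dv w"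
  then obtain e1 e2 where e: "e1 \<in> all_edges {1..m}" "x = v ` e1" "e2 \<in> all_edges {1..m}" "x = w ` e2"
    unfolding Dv_def by auto
  have s1: "idx s ` x = e1" using idx_img[OF v all_edges_sub[OF e(1)]] e(2) by simp
  have s2: "idx s ` x = e2" using idx_img[OF w all_edges_sub[OF e(3)]] e(4) by simp
  obtain i j where ij: "e1 = {i, j}" "i \<noteq> j" "i \<in> {1..m}" "j \<in> {1..m}" using e(1) by (rule all_edges_E)
  have e12: "e1 = e2" using s1 s2 by simp
  have eq: "{v i, v j} = {w i, w j}" using e(2) e(4) ij(1) e12 by (metis image_empty image_insert)
  have "v i \<noteq> w j"
  proof
    assume "v i = w j" then have "idx s (v i) = idx s (w j)" by simp
    then show False using part_props(2)[OF v ij(3)] part_props(2)[OF w ij(4)] ij by simp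
  qed
  then have "v i = w i \<and> v j = w j" using eq by (auto simp: doubleton_eq_iff)
  then have "e1 \<in> all_edges {i\<in>{1..m}. v i = w i}" using ij by (auto intro!: all_edges_I)
  then show "x \<in> (\<lambda>e. v ` e) ` all_edges {i\<in>{1..m}. v i = w i}" using e by auto
qed

end


lemma prod_le_subset:
  fixes f :: "'a \<Rightarrow> real"
  assumes "finite C" "B \<subseteq> C" "\<And>x. x \<in> C \<Longrightarrow> 0 \<le> f x \<and> f x \<le> 1"
  shows "prod f C \<le> prod f B"
proof -
  have "prod f C = prod f (C - B) * prod f B" by (rule prod.subset_diff[OF assms(2,1)])
  moreover have "prod f (C - B) \<le> 1" using assms(3) by (intro prod_le_1) auto
  moreover have "0 \<le> prod f B" using assms(2,3) by (intro prod_nonneg) auto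
  ultimately show ?thesis using mult_right_mono[of "prod f (C - B)" 1 "prod f B"] by simp
qed

context gsetup begin

definition "L = p powr (avg_degree {1..m} H / 2)"

lemma r_bounds: "0 < r e" "r e \<le> 1"
  using p_pos p_lt1 unfolding r_def by auto

lemma finite_Dv: "finite (Dv v)"
  unfolding Dv_def by (auto intro: finite_all_edges)

lemma prob_Ev: assumes "v \<in> PV" shows "measure_pmf.prob (gnp n p) {G. Ev v G} = P0"
proof -
  have "measure_pmf.prob (gnp n p) {G. Ev v G} = measure_pmf.prob Q {f. Ev v (gr f)}"
    unfolding gnp_eq by (simp add: vimage_def)
  also have "{f. Ev v (gr f)} = {f. \<forall>e\<in>Dv v. f e = T e}" using Ev_gr[OF assms] by blast
  also have "measure_pmf.prob Q \<dots> = (\<Prod>e\<in>Dv v. r e)" by (rule prob_Q[OF Dv_sub[OF assms]])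
  finally show ?thesis using prod_Dv[OF assms] by simp
qed

lemma prob_Ev2: assumes "v \<in> PV" "w \<in> PV"
  shows "measure_pmf.prob (gnp n p) {G. Ev v G \<and> Ev w G} = (\<Prod>e\<in>Dv v \<union> Dv w. r e)"
proof -
  have "measure_pmf.prob (gnp n p) {G. Ev v G \<and> Ev w G} = measure_pmf.prob Q {f. Ev v (gr f) \<and> Ev w (gr f)}"
    unfolding gnp_eq by (simp add: vimage_def)
  also have "{f. Ev v (gr f) \<and> Ev w (gr f)} = {f. \<forall>e\<in>Dv v \<union> Dv w. f e = T e}"
    by (rule Collect_cong) (simp add: Ev_gr[OF assms(1)] Ev_gr[OF assms(2)] ball_Un)
  also have "measure_pmf.prob Q \<dots> = (\<Prod>e\<in>Dv v \<union> Dv w. r e)"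
    by (rule prob_Q) (use Dv_sub[OF assms(1)] Dv_sub[OF assms(2)] in simp)
  finally show ?thesis .
qed

lemma card_all_edges_le: "card (all_edges {1..m}) \<le> m * m"
proof -
  have "card (all_edges {1..m}) = m choose 2"
    unfolding all_edges_def using n_subsets[of "{1..m}" 2] by simp
  also have "\<dots> \<le> m ^ 2"
  proof (cases "2 \<le> m")
    case True then show ?thesis by (rule binomial_le_pow)
  next
    case False then show ?thesis by (simp add: binomial_eq_0)
  qed
  finally show ?thesis by (simp add: power2_eq_square)
qed

lemma lower: assumes "A \<subseteq> {1..m}"
  shows "L ^ card A * (1 - p) ^ (m * m) \<le> (\<Prod>e\<in>all_edges A. if e \<in> H then p else 1 - p)"
proof -
  have finA: "finite (all_edges A)" using assms by (intro finite_all_edges) (auto intro: finite_subset)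
  define k where "k = card (all_edges A \<inter> H)"
  define l where "l = card (all_edges A \<inter> - H)"
  have eq: "(\<Prod>e\<in>all_edges A. if e \<in> H then p else 1 - p) = p ^ k * (1 - p) ^ l"
    using prod.If_cases[OF finA, of "\<lambda>e. e \<in> H" "\<lambda>_. p" "\<lambda>_. 1 - p"] by (simp add: k_def l_def)
  have "l \<le> card (all_edges {1..m})"
    unfolding l_def using assms by (intro card_mono) (auto simp: all_edges_def intro: finite_all_edges)
  then have l: "l \<le> m * m" using card_all_edges_le by linarith
  have ind: "all_edges A \<inter> H = induced_edges H A"
    using Hg assms unfolding induced_edges_def is_graph_on_def all_edges_def by auto
  have k: "real k \<le> avg_degree {1..m} H * card A / 2"
  proof (cases "A = {}")
    case True
    then have "all_edges A = {}" unfolding all_edges_def by auto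
    then show ?thesis using True by (simp add: k_def)
  next
    case False
    have finA': "finite A" using assms by (auto intro: finite_subset)
    then have cA: "card A > 0" using False by auto
    have "avg_degree A (induced_edges H A) \<le> avg_degree {1..m} H"
      using Hbal assms False unfolding balanced_def by blast
    then have "2 * real k / card A \<le> avg_degree {1..m} H" unfolding avg_degree_def k_def ind .
    then show ?thesis using cA by (simp add: field_simps)
  qed
  have "L ^ card A = p powr (avg_degree {1..m} H * card A / 2)"
    unfolding L_def using p_pos by (simp add: powr_realpow[symmetric] powr_powr mult.commute)
  also have "\<dots> \<le> p powr real k" using p_pos p_lt1 k by (intro powr_mono') auto
  also have "\<dots> = p ^ k" using p_pos by (simp add: powr_realpow)
  finally have a: "L ^ card A \<le> p ^ k" .
  have b: "(1 - p) ^ (m * m) \<le> (1 - p) ^ l" using p_pos p_lt1 l by (intro power_decreasing) auto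
  have "L ^ card A * (1 - p) ^ (m * m) \<le> p ^ k * (1 - p) ^ l"
    using a b p_pos p_lt1 by (intro mult_mono) (auto simp: L_def)
  then show ?thesis using eq by simp
qed

lemma L_pos: "0 < L" unfolding L_def using p_pos by simp

lemma P0_lower: "L ^ m * (1 - p) ^ (m * m) \<le> P0"
  using lower[of "{1..m}"] unfolding P0_def by simp

lemma prob2_bound: assumes v: "v \<in> PV" and w: "w \<in> PV"
  shows "measure_pmf.prob (gnp n p) {G. Ev v G \<and> Ev w G}
           \<le> P0 * P0 * ((1 / (1 - p) ^ (m * m)) * (1 / L) ^ card {i\<in>{1..m}. v i = w i})"
proof -
  define A where "A = {i\<in>{1..m}. v i = w i}"
  define U where "U = (\<Prod>e\<in>Dv v \<union> Dv w. r e)"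
  define I where "I = (\<Prod>e\<in>Dv v \<inter> Dv w. r e)"
  define J where "J = (\<Prod>e\<in>(\<lambda>e. v ` e) ` all_edges A. r e)"
  define lb where "lb = L ^ card A * (1 - p) ^ (m * m)"
  have UI: "U * I = P0 * P0" unfolding U_def I_def
    using prod.union_inter[OF finite_Dv finite_Dv, of r v w] prod_Dv[OF v] prod_Dv[OF w] by simp
  have finimg: "finite ((\<lambda>e. v ` e) ` all_edges A)"
    unfolding A_def by (intro finite_imageI finite_all_edges) auto
  have IJ: "J \<le> I" unfolding I_def J_def
    by (rule prod_le_subset[OF finimg inter_sub[OF v w, folded A_def]]) (auto intro: less_imp_le r_bounds)
  have J: "J = (\<Prod>e\<in>all_edges A. if e \<in> H then p else 1 - p)"
    unfolding J_def by (rule prod_img[OF v]) (auto simp: A_def)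
  have lbJ: "lb \<le> J" unfolding J lb_def by (rule lower) (auto simp: A_def)
  have lbpos: "0 < lb" unfolding lb_def using L_pos p_lt1 by simp
  have U0: "0 \<le> U" unfolding U_def by (intro prod_nonneg) (auto intro: less_imp_le r_bounds)
  have "U * lb \<le> U * I" using lbJ IJ U0 by (intro mult_left_mono) auto
  then have "U * lb \<le> P0 * P0" using UI by simp
  then have "U \<le> P0 * P0 / lb" using lbpos by (simp add: field_simps)
  also have "P0 * P0 / lb = P0 * P0 * ((1 / (1 - p) ^ (m * m)) * (1 / L) ^ card A)"
    unfolding lb_def by (simp add: field_simps power_one_over)
  finally show ?thesis using prob_Ev2[OF v w] unfolding U_def A_def by simp
qed

lemma sum_part: assumes "i \<in> {1..m}" "a \<in> part n m i"
  shows "(\<Sum>y\<in>part n m i. if a = y then K else (1::real)) = K + real s - 1"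
proof -
  have fin: "finite (part n m i)" by (simp add: part_def)
  have "(\<Sum>y\<in>part n m i. if a = y then K else (1::real)) = K + (\<Sum>y\<in>part n m i - {a}. if a = y then K else 1)"
    by (subst sum.remove[OF fin assms(2)]) simp
  also have "(\<Sum>y\<in>part n m i - {a}. if a = y then K else (1::real)) = (\<Sum>y\<in>part n m i - {a}. 1)"
    by (intro sum.cong) auto
  also have "\<dots> = real (card (part n m i) - 1)" using assms fin by simp
  also have "\<dots> = real s - 1" using card_part[of i] assms s_pos by simp
  finally show ?thesis by simp
qed

lemma sum_w: assumes v: "v \<in> PV"
  shows "(\<Sum>w\<in>PV. K ^ card {i\<in>{1..m}. v i = w i}) = (K + real s - 1) ^ m"
proof -
  have "(\<Sum>w\<in>PV. K ^ card {i\<in>{1..m}. v i = w i}) = (\<Sum>w\<in>PV. \<Prod>i\<in>{1..m}. if v i = w i then K else 1)"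
  proof (rule sum.cong[OF refl])
    fix w
    have "(\<Prod>i\<in>{1..m}. if v i = w i then K else 1) = (\<Prod>i\<in>{1..m} \<inter> {i. v i = w i}. K) * (\<Prod>i\<in>{1..m} \<inter> - {i. v i = w i}. 1)"
      by (rule prod.If_cases) simp
    also have "\<dots> = K ^ card {i\<in>{1..m}. v i = w i}" by (simp add: Int_def)
    finally show "K ^ card {i\<in>{1..m}. v i = w i} = (\<Prod>i\<in>{1..m}. if v i = w i then K else 1)" by simp
  qed
  also have "\<dots> = (\<Prod>i\<in>{1..m}. \<Sum>y\<in>part n m i. if v i = y then K else 1)"
    unfolding PV_def by (rule prod_sum_PiE[symmetric]) (auto simp: part_def)
  also have "\<dots> = (\<Prod>i\<in>{1..m}. K + real s - 1)"
    by (intro prod.cong refl sum_part part_props(1)[OF v]) auto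
  finally show ?thesis by simp
qed

lemma fin_supp: "finite (set_pmf (gnp n p))"
proof -
  have "set_pmf (gnp n p) \<subseteq> Pow E0" unfolding gnp_eq gr_def by auto
  then show ?thesis using finite_E0 by (auto intro: finite_subset)
qed

lemma X_sum: "real (XH n m H G) = (\<Sum>v\<in>PV. indicator {G. Ev v G} G)"
proof -
  have "real (XH n m H G) = (\<Sum>v\<in>{v\<in>PV. Ev v G}. 1)" unfolding XH_eq by simp
  also have "\<dots> = (\<Sum>v\<in>PV. if Ev v G then 1 else 0)" by (rule sum.inter_filter[OF finite_PV])
  finally show ?thesis by (simp add: indicator_def of_bool_def)
qed

lemma EX: "measure_pmf.expectation (gnp n p) (\<lambda>G. real (XH n m H G)) = real s ^ m * P0"
proof -
  have int: "\<And>f::_\<Rightarrow>real. integrable (measure_pmf (gnp n p)) f" by (rule integrable_measure_pmf_finite[OF fin_supp])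
  have "measure_pmf.expectation (gnp n p) (\<lambda>G. real (XH n m H G))
      = measure_pmf.expectation (gnp n p) (\<lambda>G. \<Sum>v\<in>PV. indicator {G. Ev v G} G)" by (simp add: X_sum)
  also have "\<dots> = (\<Sum>v\<in>PV. measure_pmf.expectation (gnp n p) (indicator {G. Ev v G}))"
    using int by simp
  also have "\<dots> = (\<Sum>v\<in>PV. P0)" by (intro sum.cong refl) (simp add: prob_Ev)
  finally show ?thesis by (simp add: card_PV)
qed

lemma EX2: "measure_pmf.expectation (gnp n p) (\<lambda>G. real (XH n m H G) ^ 2)
   = (\<Sum>v\<in>PV. \<Sum>w\<in>PV. measure_pmf.prob (gnp n p) {G. Ev v G \<and> Ev w G})"
proof -
  have int: "\<And>f::_\<Rightarrow>real. integrable (measure_pmf (gnp n p)) f" by (rule integrable_measure_pmf_finite[OF fin_supp])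
  have sq: "real (XH n m H G) ^ 2 = (\<Sum>v\<in>PV. \<Sum>w\<in>PV. indicator {G. Ev v G \<and> Ev w G} G)" for G
  proof -
    have "real (XH n m H G) ^ 2 = (\<Sum>v\<in>PV. indicator {G. Ev v G} G) * (\<Sum>w\<in>PV. indicator {G. Ev w G} G)"
      by (simp add: X_sum power2_eq_square)
    also have "\<dots> = (\<Sum>v\<in>PV. \<Sum>w\<in>PV. indicator {G. Ev v G} G * indicator {G. Ev w G} G)"
      by (rule sum_product)
    also have "\<dots> = (\<Sum>v\<in>PV. \<Sum>w\<in>PV. indicator {G. Ev v G \<and> Ev w G} G)"
      by (intro sum.cong refl) (simp add: indicator_def)
    finally show ?thesis .
  qed
  have "measure_pmf.expectation (gnp n p) (\<lambda>G. real (XH n m H G) ^ 2)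
      = measure_pmf.expectation (gnp n p) (\<lambda>G. \<Sum>v\<in>PV. \<Sum>w\<in>PV. indicator {G. Ev v G \<and> Ev w G} G)"
    by (simp add: sq)
  also have "\<dots> = (\<Sum>v\<in>PV. measure_pmf.expectation (gnp n p) (\<lambda>G. \<Sum>w\<in>PV. indicator {G. Ev v G \<and> Ev w G} G))"
    using int by simp
  also have "\<dots> = (\<Sum>v\<in>PV. \<Sum>w\<in>PV. measure_pmf.expectation (gnp n p) (indicator {G. Ev v G \<and> Ev w G}))"
    using int by simp
  also have "\<dots> = (\<Sum>v\<in>PV. \<Sum>w\<in>PV. measure_pmf.prob (gnp n p) {G. Ev v G \<and> Ev w G})"
    by simp
  finally show ?thesis .
qed

lemma EX2_bound: "measure_pmf.expectation (gnp n p) (\<lambda>G. real (XH n m H G) ^ 2)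
   \<le> (real s ^ m * P0) ^ 2 * ((1 / (1 - p) ^ (m * m)) * ((1 / L + real s - 1) / real s) ^ m)"
proof -
  define c where "c = 1 / (1 - p) ^ (m * m)"
  have "measure_pmf.expectation (gnp n p) (\<lambda>G. real (XH n m H G) ^ 2)
     \<le> (\<Sum>v\<in>PV. \<Sum>w\<in>PV. P0 * P0 * (c * (1 / L) ^ card {i\<in>{1..m}. v i = w i}))"
    unfolding EX2 c_def by (intro sum_mono prob2_bound) auto
  also have "\<dots> = (\<Sum>v\<in>PV. P0 * P0 * c * (\<Sum>w\<in>PV. (1 / L) ^ card {i\<in>{1..m}. v i = w i}))"
    by (simp add: sum_distrib_left mult.assoc)
  also have "\<dots> = (\<Sum>v\<in>PV. P0 * P0 * c * (1 / L + real s - 1) ^ m)"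
  proof (intro sum.cong refl)
    fix v assume "v \<in> PV"
    show "P0 * P0 * c * (\<Sum>w\<in>PV. (1 / L) ^ card {i\<in>{1..m}. v i = w i}) = P0 * P0 * c * (1 / L + real s - 1) ^ m"
      by (simp only: sum_w[OF \<open>v \<in> PV\<close>])
  qed
  also have "\<dots> = real s ^ m * (P0 * P0 * c * (1 / L + real s - 1) ^ m)" by (simp add: card_PV)
  also have "\<dots> = (real s ^ m * P0) ^ 2 * (c * ((1 / L + real s - 1) / real s) ^ m)"
    using s_pos by (simp add: field_simps power2_eq_square power_divide)
  finally show ?thesis unfolding c_def .
qed

lemma ratio_bound: assumes dv: "m dvd n" and h1: "real (m * m) * p \<le> \<epsilon>"
  and h2: "real m * real m / real n * (1 / L) \<le> \<epsilon>" and e: "0 < \<epsilon>" "\<epsilon> \<le> 1/4"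
  shows "(1 / (1 - p) ^ (m * m)) * ((1 / L + real s - 1) / real s) ^ m \<le> 1 + 4 * \<epsilon>"
proof -
  have n_eq: "real n = real m * real s" using dv by (metis dvd_mult_div_cancel of_nat_mult)
  have spos: "0 < real s" using s_pos by simp
  have mpos: "0 < real m" using m_pos by simp
  define x where "x = (1 / L) / real s"
  have x0: "0 \<le> x" unfolding x_def using L_pos spos by simp
  have "(1 / L + real s - 1) / real s \<le> 1 + x" unfolding x_def using spos by (simp add: field_simps)
  moreover have Q0: "0 \<le> (1 / L + real s - 1) / real s"
  proof -
    have "1 \<le> real s" using s_pos by simp
    moreover have "0 < 1 / L" using L_pos by simp
    ultimately show ?thesis by (intro divide_nonneg_nonneg) linarith+
  qed
  ultimately have "((1 / L + real s - 1) / real s) ^ m \<le> (1 + x) ^ m" by (rule power_mono)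
  also have "\<dots> \<le> exp x ^ m" using x0 by (intro power_mono) auto
  also have "\<dots> = exp (real m * x)" by (simp add: exp_of_nat_mult)
  also have mx: "real m * x = real m * real m / real n * (1 / L)" unfolding x_def n_eq using mpos spos by simp
  also have "exp (real m * real m / real n * (1 / L)) \<le> 1 + 2 * (real m * real m / real n * (1 / L))"
  proof -
    have "0 \<le> real m * real m / real n * (1 / L)" using L_pos by simp
    then have "norm (real m * real m / real n * (1 / L)) \<le> 1/2" using h2 e by simp
    from exp_bound_lemma[OF this] show ?thesis using \<open>0 \<le> real m * real m / real n * (1 / L)\<close> by simp
  qed
  also have "\<dots> \<le> 1 + 2 * \<epsilon>" using h2 by simp
  finally have A: "((1 / L + real s - 1) / real s) ^ m \<le> 1 + 2 * \<epsilon>" .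
  have "1 + real (m * m) * (- p) \<le> (1 + (- p)) ^ (m * m)" by (rule Bernoulli_inequality) (use p_lt1 in simp)
  then have B: "1 - \<epsilon> \<le> (1 - p) ^ (m * m)" using h1 by simp
  have Bpos: "0 < 1 - \<epsilon>" using e by simp
  have "(1 / (1 - p) ^ (m * m)) \<le> 1 / (1 - \<epsilon>)" using B Bpos by (intro divide_left_mono) auto
  then have "(1 / (1 - p) ^ (m * m)) * ((1 / L + real s - 1) / real s) ^ m \<le> 1 / (1 - \<epsilon>) * (1 + 2 * \<epsilon>)"
    using A Bpos p_lt1 zero_le_power[OF Q0, of m] by (intro mult_mono) auto
  also have "\<dots> \<le> 1 + 4 * \<epsilon>"
  proof -
    have "\<epsilon> * \<epsilon> \<le> \<epsilon> * (1/4)" using e by (intro mult_left_mono) auto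
    then have "1 + 2 * \<epsilon> \<le> (1 + 4 * \<epsilon>) * (1 - \<epsilon>)" by (simp add: algebra_simps)
    then show ?thesis using Bpos by (simp add: pos_divide_le_eq)
  qed
  finally show ?thesis .
qed

lemma first_moment: assumes dv: "m dvd n" and h1: "real (m * m) * p \<le> 1/2" and sL: "1 \<le> real s * L"
  shows "real s * L / 2 \<le> measure_pmf.expectation (gnp n p) (\<lambda>G. real (XH n m H G))"
proof -
  have "1 + real (m * m) * (- p) \<le> (1 + (- p)) ^ (m * m)" by (rule Bernoulli_inequality) (use p_lt1 in simp)
  then have B: "1/2 \<le> (1 - p) ^ (m * m)" using h1 by simp
  have "real s * L \<le> (real s * L) ^ m" using sL m_pos power_increasing[of 1 m "real s * L"] by simp
  also have "\<dots> = real s ^ m * L ^ m" by (simp add: power_mult_distrib)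
  finally have C: "real s * L / 2 \<le> real s ^ m * L ^ m * (1/2)" by simp
  also have "\<dots> \<le> real s ^ m * L ^ m * (1 - p) ^ (m * m)"
    using B L_pos by (intro mult_left_mono) auto
  also have "\<dots> = real s ^ m * (L ^ m * (1 - p) ^ (m * m))" by simp
  also have "\<dots> \<le> real s ^ m * P0" using P0_lower by (intro mult_left_mono) auto
  finally show ?thesis by (simp add: EX)
qed

end

lemma cheb_gen:
  fixes M :: "'a pmf" and X :: "'a \<Rightarrow> real"
  assumes fin: "finite (set_pmf M)" and E: "E = measure_pmf.expectation M X" and Epos: "0 < E"
    and E2: "measure_pmf.expectation M (\<lambda>x. X x ^ 2) \<le> E ^ 2 * R" and b: "0 \<le> \<beta>" "\<beta> < 1"
  shows "measure_pmf.prob M {x. X x \<le> \<beta> * E} \<le> (R - 1) / (1 - \<beta>) ^ 2"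
proof -
  have int: "\<And>f::'a\<Rightarrow>real. integrable (measure_pmf M) f" by (rule integrable_measure_pmf_finite[OF fin])
  define Y where "Y x = (X x - E) ^ 2" for x
  have Yeq: "Y = (\<lambda>x. X x ^ 2 - 2 * E * X x + E ^ 2)" by (simp add: Y_def fun_eq_iff power2_diff)
  have EY: "measure_pmf.expectation M Y = measure_pmf.expectation M (\<lambda>x. X x ^ 2) - E ^ 2"
    unfolding Yeq using int by (simp add: E power2_eq_square)
  define c where "c = ((1 - \<beta>) * E) ^ 2"
  have cpos: "0 < c" unfolding c_def using b Epos by simp
  have sub: "{x. X x \<le> \<beta> * E} \<subseteq> {x\<in>space (measure_pmf M). c \<le> Y x}"
  proof
    fix x assume "x \<in> {x. X x \<le> \<beta> * E}"
    then have h: "(1 - \<beta>) * E \<le> E - X x" by (simp add: algebra_simps)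
    have "0 \<le> (1 - \<beta>) * E" using b Epos by simp
    then have "((1 - \<beta>) * E) ^ 2 \<le> (E - X x) ^ 2" using h by (intro power_mono) auto
    then show "x \<in> {x\<in>space (measure_pmf M). c \<le> Y x}" by (simp add: c_def Y_def power2_commute)
  qed
  have "measure_pmf.prob M {x. X x \<le> \<beta> * E} \<le> measure_pmf.prob M {x\<in>space (measure_pmf M). c \<le> Y x}"
    using sub by (intro measure_pmf.finite_measure_mono) auto
  also have "\<dots> \<le> measure_pmf.expectation M Y / c"
    by (rule integral_Markov_inequality_measure[where A = "space (measure_pmf M)"]) (auto simp: int cpos Y_def)
  also have "\<dots> \<le> (E ^ 2 * R - E ^ 2) / c" using E2 cpos by (simp add: EY divide_right_mono)
  also have "\<dots> = (R - 1) / (1 - \<beta>) ^ 2"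
  proof -
    have "E ^ 2 * R - E ^ 2 = E ^ 2 * (R - 1)" by (simp add: algebra_simps)
    moreover have "c = E ^ 2 * (1 - \<beta>) ^ 2" unfolding c_def by (simp add: power_mult_distrib)
    moreover have "E ^ 2 \<noteq> 0" using Epos by simp
    ultimately show ?thesis by simp
  qed
  finally show ?thesis .
qed


lemma ev_small: assumes "a < 0" "0 < e" shows "\<exists>N. \<forall>n\<ge>N. real n powr a < e"
proof -
  have "((\<lambda>n. real n powr a) \<longlongrightarrow> 0) sequentially"
    by (rule tendsto_neg_powr[OF assms(1) filterlim_real_sequentially])
  then have "eventually (\<lambda>n. real n powr a < e) sequentially" using assms(2) by (rule order_tendstoD)
  then show ?thesis by (simp add: eventually_sequentially)
qed

lemma m_bounds: assumes "2 \<le> n" "0 < \<rho>" "\<rho> < 1" "m = nat \<lfloor>real n powr \<rho>\<rfloor>"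
  shows "1 \<le> m" "m \<le> n" "real m \<le> real n powr \<rho>"
proof -
  have x1: "1 \<le> real n" using assms by simp
  have a: "1 \<le> real n powr \<rho>" using x1 assms by (intro ge_one_powr_ge_zero) auto
  have b: "real n powr \<rho> \<le> real n powr 1" using x1 assms by (intro powr_mono) auto
  then have b': "real n powr \<rho> \<le> real n" by simp
  show "1 \<le> m" using a assms(4) by (simp add: le_nat_floor)
  show c: "real m \<le> real n powr \<rho>" using a assms(4) by simp
  show "m \<le> n" using c b' by linarith
qed

lemma powr_comb1: assumes "0 < (x::real)" shows "x powr a / x * x powr b = x powr (a + b - 1)"
proof -
  have "x powr (a + b - 1) = x powr a * x powr b / x powr 1" by (simp only: powr_diff powr_add)
  then show ?thesis using powr_one[of x] assms by simp
qed

lemma powr_comb2: assumes "0 < (x::real)" shows "x / x powr a * x powr c = x powr (1 - a + c)"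
proof -
  have "x powr (1 - a + c) = x powr 1 / x powr a * x powr c" by (simp only: powr_diff powr_add)
  then show ?thesis using powr_one[of x] assms by simp
qed

lemma per_n:
  fixes \<delta> \<epsilon> \<alpha> \<rho> :: real
  assumes d: "0 < \<delta>" "\<delta> < 1" and r: "0 < \<rho>" "\<rho> < 1"
    and n2: "2 \<le> n" and mdef: "m = nat \<lfloor>real n powr \<rho>\<rfloor>" and dv: "m dvd n"
    and Hg: "is_graph_on {1..m} H" and Havg: "avg_degree {1..m} H = \<alpha>" and Hb: "balanced {1..m} H"
  shows "gsetup n m H (real n powr (\<delta> - 1))"
    and "real (m * m) * real n powr (\<delta> - 1) \<le> real n powr (2 * \<rho> + \<delta> - 1)"
    and "real m * real m / real n * (1 / gsetup.L m H (real n powr (\<delta> - 1)))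
           \<le> real n powr (2 * \<rho> + \<alpha> * (1 - \<delta>) / 2 - 1)"
    and "real n powr (1 - \<rho> - \<alpha> * (1 - \<delta>) / 2) \<le> real (n div m) * gsetup.L m H (real n powr (\<delta> - 1))"
proof -
  define x where "x = real n"
  define p where "p = x powr (\<delta> - 1)"
  have x2: "2 \<le> x" using n2 unfolding x_def by simp
  have xpos: "0 < x" using x2 by simp
  note mb = m_bounds[OF n2 r mdef]
  have p0: "0 < p" unfolding p_def using xpos by simp
  have p1: "p < 1" unfolding p_def using x2 d by (intro powr_less_one) auto
  have sp: "1 \<le> n div m" using mb div_greater_zero_iff[of n m] by simp
  show gs: "gsetup n m H (real n powr (\<delta> - 1))"
    using mb sp Hg Hb p0 p1 unfolding p_def x_def by unfold_locales auto
  have mr: "real m \<le> x powr \<rho>" using mb unfolding x_def by simp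
  have mm: "real m * real m \<le> x powr (2 * \<rho>)"
  proof -
    have "real m * real m \<le> x powr \<rho> * x powr \<rho>" using mr by (intro mult_mono) auto
    also have "\<dots> = x powr (\<rho> + \<rho>)" by (simp only: powr_add)
    also have "\<rho> + \<rho> = 2 * \<rho>" by simp
    finally show ?thesis .
  qed
  have "real (m * m) * p \<le> x powr (2 * \<rho>) * p" using mm p0 by (intro mult_right_mono) auto
  also have "\<dots> = x powr (2 * \<rho> + (\<delta> - 1))" unfolding p_def by (simp only: powr_add)
  also have "2 * \<rho> + (\<delta> - 1) = 2 * \<rho> + \<delta> - 1" by simp
  finally show "real (m * m) * real n powr (\<delta> - 1) \<le> real n powr (2 * \<rho> + \<delta> - 1)" unfolding p_def x_def .
  have gs': "gsetup n m H p" using gs unfolding p_def x_def .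
  have "gsetup.L m H p = p powr (\<alpha> / 2)" using gsetup.L_def[OF gs'] Havg by simp
  also have "\<dots> = x powr ((\<delta> - 1) * (\<alpha> / 2))" unfolding p_def by (rule powr_powr)
  finally have L: "gsetup.L m H p = x powr ((\<delta> - 1) * (\<alpha> / 2))" .
  have Li: "1 / gsetup.L m H p = x powr (\<alpha> * (1 - \<delta>) / 2)"
  proof -
    have "x powr (- ((\<delta> - 1) * (\<alpha> / 2))) = inverse (x powr ((\<delta> - 1) * (\<alpha> / 2)))" by (rule powr_minus)
    then have "1 / gsetup.L m H p = x powr (- ((\<delta> - 1) * (\<alpha> / 2)))" unfolding L by (simp add: inverse_eq_divide)
    also have "- ((\<delta> - 1) * (\<alpha> / 2)) = \<alpha> * (1 - \<delta>) / 2" by (simp add: field_simps)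
    finally show ?thesis .
  qed
  have "real m * real m / x * (1 / gsetup.L m H p) \<le> x powr (2 * \<rho>) / x * x powr (\<alpha> * (1 - \<delta>) / 2)"
    unfolding Li using mm xpos by (intro mult_right_mono divide_right_mono) auto
  also have "\<dots> = x powr (2 * \<rho> + \<alpha> * (1 - \<delta>) / 2 - 1)"
    by (rule powr_comb1[OF xpos])
  finally show "real m * real m / real n * (1 / gsetup.L m H (real n powr (\<delta> - 1)))
           \<le> real n powr (2 * \<rho> + \<alpha> * (1 - \<delta>) / 2 - 1)" unfolding x_def p_def .
  have seq: "real (n div m) = x / real m"
  proof -
    have "n = m * (n div m)" using dv by simp
    then have "real n = real m * real (n div m)" by (metis of_nat_mult)
    moreover have "0 < real m" using mb by simp
    ultimately show ?thesis unfolding x_def by (simp add: field_simps)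
  qed
  have e: "1 - \<rho> - \<alpha> * (1 - \<delta>) / 2 = 1 - \<rho> + (\<delta> - 1) * (\<alpha> / 2)" by (simp add: field_simps)
  have "x powr (1 - \<rho> - \<alpha> * (1 - \<delta>) / 2) = x / x powr \<rho> * x powr ((\<delta> - 1) * (\<alpha> / 2))"
    unfolding e by (rule powr_comb2[OF xpos, symmetric])
  also have "\<dots> \<le> x / real m * x powr ((\<delta> - 1) * (\<alpha> / 2))"
    using mr mb xpos by (intro mult_right_mono divide_left_mono) auto
  finally show "real n powr (1 - \<rho> - \<alpha> * (1 - \<delta>) / 2) \<le> real (n div m) * gsetup.L m H (real n powr (\<delta> - 1))"
    unfolding seq L[unfolded p_def x_def] x_def .
qed
theorem corollaryC1:
  fixes \<delta> \<epsilon> \<alpha> \<rho> :: real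
  assumes "0 < \<delta>" "\<delta> < 1"
    and "0 < \<epsilon>" "\<epsilon> < 1/7"
    and "2 < \<alpha>" "\<alpha> < min (2 / (1 - \<delta>)) 3"
    and "0 < \<rho>" "\<rho> < min ((1 - \<delta>) / 2) ((2 - \<alpha> * (1 - \<delta>)) / 4)"
  shows
    "(\<forall>M::real. \<exists>N. \<forall>n\<ge>N. \<forall>m H.
        m = nat \<lfloor>real n powr \<rho>\<rfloor> \<longrightarrow> m dvd n \<longrightarrow>
        is_graph_on {1..m} H \<longrightarrow> avg_degree {1..m} H = \<alpha> \<longrightarrow> balanced {1..m} H \<longrightarrow>
        measure_pmf.expectation (gnp n (real n powr (\<delta> - 1))) (\<lambda>G. real (XH n m H G)) \<ge> M)
     \<and>
     (\<exists>N. \<forall>n\<ge>N. \<forall>m H.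
        m = nat \<lfloor>real n powr \<rho>\<rfloor> \<longrightarrow> m dvd n \<longrightarrow>
        is_graph_on {1..m} H \<longrightarrow> avg_degree {1..m} H = \<alpha> \<longrightarrow> balanced {1..m} H \<longrightarrow>
        (\<forall>\<beta>::real. 0 \<le> \<beta> \<longrightarrow> \<beta> < 1 \<longrightarrow>
           measure_pmf.prob (gnp n (real n powr (\<delta> - 1)))
             {G. real (XH n m H G) \<le> \<beta> * measure_pmf.expectation (gnp n (real n powr (\<delta> - 1)))
                                               (\<lambda>G. real (XH n m H G))}
           \<le> 4 * \<epsilon> / (1 - \<beta>)^2))"
proof -
  have d: "0 < \<delta>" "\<delta> < 1" using assms by auto
  have e: "0 < \<epsilon>" "\<epsilon> \<le> 1/4" using assms by auto
  have rho1: "\<rho> < (1 - \<delta>) / 2" and rho2: "\<rho> < (2 - \<alpha> * (1 - \<delta>)) / 4" using assms(8) by auto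
  have r: "0 < \<rho>" "\<rho> < 1" using assms(7) rho1 d by auto
  have a1: "2 * \<rho> + \<delta> - 1 < 0" using rho1 by simp
  have a2: "2 * \<rho> + \<alpha> * (1 - \<delta>) / 2 - 1 < 0" using rho2 by simp
  have g0: "0 < 1 - \<rho> - \<alpha> * (1 - \<delta>) / 2" using rho2 r by simp
  obtain N1 where N1: "\<forall>n\<ge>N1. real n powr (2 * \<rho> + \<delta> - 1) < \<epsilon>" using ev_small[OF a1 e(1)] by blast
  obtain N2 where N2: "\<forall>n\<ge>N2. real n powr (2 * \<rho> + \<alpha> * (1 - \<delta>) / 2 - 1) < \<epsilon>"
    using ev_small[OF a2 e(1)] by blast
  show ?thesis
  proof (intro conjI allI)
    fix M :: real
    define B where "B = 2 * (\<bar>M\<bar> + 1)"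
    have Bpos: "0 < B" unfolding B_def by simp
    have ng: "- (1 - \<rho> - \<alpha> * (1 - \<delta>) / 2) < 0" using g0 by simp
    obtain N3 where N3: "\<forall>n\<ge>N3. real n powr (- (1 - \<rho> - \<alpha> * (1 - \<delta>) / 2)) < 1 / B"
      using ev_small[OF ng] Bpos by force
    show "\<exists>N. \<forall>n\<ge>N. \<forall>m H.
        m = nat \<lfloor>real n powr \<rho>\<rfloor> \<longrightarrow> m dvd n \<longrightarrow>
        is_graph_on {1..m} H \<longrightarrow> avg_degree {1..m} H = \<alpha> \<longrightarrow> balanced {1..m} H \<longrightarrow>
        measure_pmf.expectation (gnp n (real n powr (\<delta> - 1))) (\<lambda>G. real (XH n m H G)) \<ge> M"
    proof (intro exI[of _ "max (max N1 N3) 2"] allI impI)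
      fix n m H
      assume n: "max (max N1 N3) 2 \<le> n" and mdef: "m = nat \<lfloor>real n powr \<rho>\<rfloor>" and dv: "m dvd n"
        and Hg: "is_graph_on {1..m} H" and Havg: "avg_degree {1..m} H = \<alpha>" and Hb: "balanced {1..m} H"
      have n2: "2 \<le> n" using n by simp
      note P = per_n[OF d r n2 mdef dv Hg Havg Hb]
      interpret g: gsetup n m H "real n powr (\<delta> - 1)" by (rule P(1))
      have h1: "real (m * m) * real n powr (\<delta> - 1) \<le> 1/2" using P(2) N1 n e by force
      define y where "y = real n powr (1 - \<rho> - \<alpha> * (1 - \<delta>) / 2)"
      have ypos: "0 < y" unfolding y_def using n2 by simp
      have "N3 \<le> n" using n by simp
      then have "real n powr (- (1 - \<rho> - \<alpha> * (1 - \<delta>) / 2)) < 1 / B" using N3 by blast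
      moreover have "inverse y = real n powr (- (1 - \<rho> - \<alpha> * (1 - \<delta>) / 2))"
        unfolding y_def by (rule powr_minus[symmetric])
      ultimately have "inverse y < 1 / B" by simp
      then have yB: "B < y" using ypos Bpos by (simp add: field_simps inverse_eq_divide)
      have BsL: "B < real (n div m) * g.L" using yB P(4) unfolding y_def by (rule less_le_trans)
      have B2: "2 \<le> B" unfolding B_def by simp
      have sL: "1 \<le> real (n div m) * g.L" using BsL B2 by linarith
      have "real (n div m) * g.L / 2 \<le> measure_pmf.expectation (gnp n (real n powr (\<delta> - 1))) (\<lambda>G. real (XH n m H G))"
        by (rule g.first_moment[OF dv h1 sL])
      moreover have "M \<le> real (n div m) * g.L / 2" using BsL abs_ge_self[of M] unfolding B_def by simp
      ultimately show "M \<le> measure_pmf.expectation (gnp n (real n powr (\<delta> - 1))) (\<lambda>G. real (XH n m H G))"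
        by linarith
    qed
  next
    show "\<exists>N. \<forall>n\<ge>N. \<forall>m H.
        m = nat \<lfloor>real n powr \<rho>\<rfloor> \<longrightarrow> m dvd n \<longrightarrow>
        is_graph_on {1..m} H \<longrightarrow> avg_degree {1..m} H = \<alpha> \<longrightarrow> balanced {1..m} H \<longrightarrow>
        (\<forall>\<beta>::real. 0 \<le> \<beta> \<longrightarrow> \<beta> < 1 \<longrightarrow>
           measure_pmf.prob (gnp n (real n powr (\<delta> - 1)))
             {G. real (XH n m H G) \<le> \<beta> * measure_pmf.expectation (gnp n (real n powr (\<delta> - 1)))
                                               (\<lambda>G. real (XH n m H G))}
           \<le> 4 * \<epsilon> / (1 - \<beta>)^2)"
    proof (intro exI[of _ "max (max N1 N2) 2"] allI impI)
      fix n m H and \<beta> :: real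
      assume n: "max (max N1 N2) 2 \<le> n" and mdef: "m = nat \<lfloor>real n powr \<rho>\<rfloor>" and dv: "m dvd n"
        and Hg: "is_graph_on {1..m} H" and Havg: "avg_degree {1..m} H = \<alpha>" and Hb: "balanced {1..m} H"
        and b: "0 \<le> \<beta>" "\<beta> < 1"
      have n2: "2 \<le> n" using n by simp
      note P = per_n[OF d r n2 mdef dv Hg Havg Hb]
      interpret g: gsetup n m H "real n powr (\<delta> - 1)" by (rule P(1))
      have h1: "real (m * m) * real n powr (\<delta> - 1) \<le> \<epsilon>" using P(2) N1 n by force
      have h2: "real m * real m / real n * (1 / g.L) \<le> \<epsilon>" using P(3) N2 n by force
      define R where "R = (1 / (1 - real n powr (\<delta> - 1)) ^ (m * m)) * ((1 / g.L + real (n div m) - 1) / real (n div m)) ^ m"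
      have R: "R \<le> 1 + 4 * \<epsilon>" unfolding R_def by (rule g.ratio_bound[OF dv h1 h2 e])
      define E where "E = measure_pmf.expectation (gnp n (real n powr (\<delta> - 1))) (\<lambda>G. real (XH n m H G))"
      have Eeq: "E = real (n div m) ^ m * g.P0" unfolding E_def by (rule g.EX)
      have P0pos: "0 < g.P0"
      proof -
        have "0 < g.L ^ m * (1 - real n powr (\<delta> - 1)) ^ (m * m)" using g.L_pos g.p_lt1 by simp
        then show ?thesis using g.P0_lower by linarith
      qed
      have Epos: "0 < E" unfolding Eeq using P0pos g.s_pos by simp
      have E2: "measure_pmf.expectation (gnp n (real n powr (\<delta> - 1))) (\<lambda>G. real (XH n m H G) ^ 2) \<le> E ^ 2 * R"
        unfolding Eeq R_def by (rule g.EX2_bound)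
      have "measure_pmf.prob (gnp n (real n powr (\<delta> - 1))) {G. real (XH n m H G) \<le> \<beta> * E} \<le> (R - 1) / (1 - \<beta>) ^ 2"
        by (rule cheb_gen[OF g.fin_supp E_def Epos E2 b])
      also have "\<dots> \<le> 4 * \<epsilon> / (1 - \<beta>) ^ 2" using R b by (intro divide_right_mono) auto
      finally show "measure_pmf.prob (gnp n (real n powr (\<delta> - 1)))
             {G. real (XH n m H G) \<le> \<beta> * measure_pmf.expectation (gnp n (real n powr (\<delta> - 1)))
                                               (\<lambda>G. real (XH n m H G))}
           \<le> 4 * \<epsilon> / (1 - \<beta>)^2" unfolding E_def .
    qed
  qed
qed

end
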